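(* Let $R$ be a ring with identity, ${}_RM$ a finitely generated semisimple left $R$-module, $\varphi:M\to M$ a nilpotent $R$-endomorphism, and $\{x_{\gamma,i}\mid\gamma\in\Gamma,1\le i\le k_\gamma\}$ a nilpotent Jordan normal base of ${}_RM$ with respect to $\varphi$, with $\Gamma$ finite. Let $\Phi:(R[t])^\Gamma\to M$, $\Phi(\mathbf f)=\sum_{\gamma\in\Gamma}f_\gamma(t)\ast x_{\gamma,1}$, and \[\mathcal M(\Phi)=\{\mathbf P\in M_{\Gamma\times\Gamma}(R[t])\mid \mathbf f\mathbf P\in\ker(\Phi)\text{ for all }\mathbf f\in\ker(\Phi)\}.\] Then $\mathcal M(\Phi)$ is a $Z(R)$-subalgebra of $M_{\Gamma\times\Gamma}(R[t])$. For $\mathbf P\in\mathcal M(\Phi)$, the formula $\psi_{\mathbf P}(\Phi(\mathbf f))=\Phi(\mathbf f\mathbf P)$ ($\mathbf f\in(R[t])^\Gamma$) properly defines an $R$-endomorphism $\psi_{\mathbf P}:M\to M$ with $\psi_{\mathbf P}\circ\varphi=\varphi\circ\psi_{\mathbf P}$, and the assignment $\mathbf P\mapsto\psi_{\mathbf P}$ is a homomorphism of $Z(R)$-algebras $\mathcal M(\Phi)^{\mathrm{op}}\to C_\varphi$.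
   Context: A nilpotent Jordan normal base of ${}_RM$ with respect to $\varphi$ is a subset $\{x_{\gamma,i}\}$ (integers $k_\gamma\ge1$) such that each $Rx_{\gamma,i}$ is simple, $M=\bigoplus_{\gamma,i}Rx_{\gamma,i}$, $\varphi(x_{\gamma,i})=x_{\gamma,i+1}$ for $i<k_\gamma$, $\varphi(x_{\gamma,k_\gamma})=0$. $R[t]$ is the polynomial ring in a commuting indeterminate; $M$ is a left $R[t]$-module via $(a_1+a_2t+\cdots+a_{n+1}t^n)\ast u=a_1u+a_2\varphi(u)+\cdots+a_{n+1}\varphi^n(u)$. Elements of $(R[t])^\Gamma$ are viewed as $1\times\Gamma$ row vectors (after fixing a linear order on $\Gamma$) and $\mathbf f\mathbf P$ is the matrix product. $Z(R)$ is the centre of $R$, and $C_\varphi=\{\psi\in\mathrm{Hom}_R(M,M)\mid\psi\circ\varphi=\varphi\circ\psi\}$. *)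

theory Defs
  imports Main "HOL-Library.Poly_Mapping"
begin

text \<open>R is a type of class ring_1; R[t] (commuting indeterminate t, coefficients
  on the left, convolution product) is represented by a finitely supported map nat to r (poly_mapping),
  i.e. finitely supported coefficient sequences.\<close>

type_synonym 'r rpoly = "nat \<Rightarrow>\<^sub>0 'r"

definition lmodule :: "('r::ring_1 \<Rightarrow> 'm::ab_group_add \<Rightarrow> 'm) \<Rightarrow> bool" where
  "lmodule sm \<longleftrightarrow>
     (\<forall>a b m. sm (a + b) m = sm a m + sm b m) \<and>
     (\<forall>a m n. sm a (m + n) = sm a m + sm a n) \<and>
     (\<forall>a b m. sm (a * b) m = sm a (sm b m)) \<and>
     (\<forall>m. sm 1 m = m)"

definition submodule :: "('r::ring_1 \<Rightarrow> 'm::ab_group_add \<Rightarrow> 'm) \<Rightarrow> 'm set \<Rightarrow> bool" where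
  "submodule sm N \<longleftrightarrow> 0 \<in> N \<and> (\<forall>u\<in>N. \<forall>v\<in>N. u + v \<in> N) \<and> (\<forall>a. \<forall>u\<in>N. sm a u \<in> N)"

definition cyc :: "('r::ring_1 \<Rightarrow> 'm::ab_group_add \<Rightarrow> 'm) \<Rightarrow> 'm \<Rightarrow> 'm set" where
  "cyc sm x = {sm a x | a. True}"

definition simple_submodule :: "('r::ring_1 \<Rightarrow> 'm::ab_group_add \<Rightarrow> 'm) \<Rightarrow> 'm set \<Rightarrow> bool" where
  "simple_submodule sm N \<longleftrightarrow> submodule sm N \<and> N \<noteq> {0} \<and>
     (\<forall>L. submodule sm L \<and> L \<subseteq> N \<longrightarrow> L = {0} \<or> L = N)"

definition rspan :: "('r::ring_1 \<Rightarrow> 'm::ab_group_add \<Rightarrow> 'm) \<Rightarrow> 'm set \<Rightarrow> 'm set" where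
  "rspan sm S = {(\<Sum>s\<in>F. sm (c s) s) | F c. finite F \<and> F \<subseteq> S}"

definition finitely_generated :: "('r::ring_1 \<Rightarrow> 'm::ab_group_add \<Rightarrow> 'm) \<Rightarrow> bool" where
  "finitely_generated sm \<longleftrightarrow> (\<exists>S. finite S \<and> rspan sm S = UNIV)"

definition semisimple :: "('r::ring_1 \<Rightarrow> 'm::ab_group_add \<Rightarrow> 'm) \<Rightarrow> bool" where
  "semisimple sm \<longleftrightarrow> rspan sm (\<Union>{N. simple_submodule sm N}) = UNIV"

definition rhom :: "('r::ring_1 \<Rightarrow> 'm::ab_group_add \<Rightarrow> 'm) \<Rightarrow> ('m \<Rightarrow> 'm) \<Rightarrow> bool" where
  "rhom sm f \<longleftrightarrow> (\<forall>u v. f (u + v) = f u + f v) \<and> (\<forall>a u. f (sm a u) = sm a (f u))"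

definition nilpotent_map :: "('m::ab_group_add \<Rightarrow> 'm) \<Rightarrow> bool" where
  "nilpotent_map \<phi> \<longleftrightarrow> (\<exists>n. \<forall>u. (\<phi> ^^ n) u = 0)"

definition jidx :: "'g set \<Rightarrow> ('g \<Rightarrow> nat) \<Rightarrow> ('g \<times> nat) set" where
  "jidx \<Gamma> k = Sigma \<Gamma> (\<lambda>\<gamma>. {1..k \<gamma>})"

definition jordan_base ::
  "('r::ring_1 \<Rightarrow> 'm::ab_group_add \<Rightarrow> 'm) \<Rightarrow> ('m \<Rightarrow> 'm) \<Rightarrow> 'g set \<Rightarrow> ('g \<Rightarrow> nat) \<Rightarrow> ('g \<Rightarrow> nat \<Rightarrow> 'm) \<Rightarrow> bool" where
  "jordan_base sm \<phi> \<Gamma> k x \<longleftrightarrow>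
     (\<forall>\<gamma>\<in>\<Gamma>. 1 \<le> k \<gamma>) \<and>
     (\<forall>(\<gamma>, i)\<in>jidx \<Gamma> k. simple_submodule sm (cyc sm (x \<gamma> i))) \<and>
     (\<forall>m. \<exists>!c :: 'g \<times> nat \<Rightarrow> 'm.
          (\<forall>(\<gamma>, i)\<in>jidx \<Gamma> k. c (\<gamma>, i) \<in> cyc sm (x \<gamma> i)) \<and>
          (\<forall>p. p \<notin> jidx \<Gamma> k \<longrightarrow> c p = 0) \<and>
          m = (\<Sum>p\<in>jidx \<Gamma> k. c p)) \<and>
     (\<forall>\<gamma>\<in>\<Gamma>. \<forall>i. 1 \<le> i \<and> i < k \<gamma> \<longrightarrow> \<phi> (x \<gamma> i) = x \<gamma> (Suc i)) \<and>
     (\<forall>\<gamma>\<in>\<Gamma>. \<phi> (x \<gamma> (k \<gamma>)) = 0)"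

definition pact :: "('r::ring_1 \<Rightarrow> 'm::ab_group_add \<Rightarrow> 'm) \<Rightarrow> ('m \<Rightarrow> 'm) \<Rightarrow> 'r rpoly \<Rightarrow> 'm \<Rightarrow> 'm" where
  "pact sm \<phi> p u = (\<Sum>n\<in>Poly_Mapping.keys p. sm (Poly_Mapping.lookup p n) ((\<phi> ^^ n) u))"

definition rvecs :: "'g set \<Rightarrow> ('g \<Rightarrow> 'r::ring_1 rpoly) set" where
  "rvecs \<Gamma> = {f. \<forall>\<gamma>. \<gamma> \<notin> \<Gamma> \<longrightarrow> f \<gamma> = 0}"

definition rmats :: "'g set \<Rightarrow> ('g \<Rightarrow> 'g \<Rightarrow> 'r::ring_1 rpoly) set" where
  "rmats \<Gamma> = {P. \<forall>\<gamma> \<delta>. \<gamma> \<notin> \<Gamma> \<or> \<delta> \<notin> \<Gamma> \<longrightarrow> P \<gamma> \<delta> = 0}"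

definition vmult :: "'g set \<Rightarrow> ('g \<Rightarrow> 'r::ring_1 rpoly) \<Rightarrow> ('g \<Rightarrow> 'g \<Rightarrow> 'r rpoly) \<Rightarrow> ('g \<Rightarrow> 'r rpoly)" where
  "vmult \<Gamma> f P = (\<lambda>\<delta>. \<Sum>\<gamma>\<in>\<Gamma>. f \<gamma> * P \<gamma> \<delta>)"

definition mmult :: "'g set \<Rightarrow> ('g \<Rightarrow> 'g \<Rightarrow> 'r::ring_1 rpoly) \<Rightarrow> ('g \<Rightarrow> 'g \<Rightarrow> 'r rpoly) \<Rightarrow> ('g \<Rightarrow> 'g \<Rightarrow> 'r rpoly)" where
  "mmult \<Gamma> P Q = (\<lambda>\<gamma> \<delta>. \<Sum>\<epsilon>\<in>\<Gamma>. P \<gamma> \<epsilon> * Q \<epsilon> \<delta>)"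

definition madd :: "('g \<Rightarrow> 'g \<Rightarrow> 'r::ring_1 rpoly) \<Rightarrow> ('g \<Rightarrow> 'g \<Rightarrow> 'r rpoly) \<Rightarrow> ('g \<Rightarrow> 'g \<Rightarrow> 'r rpoly)" where
  "madd P Q = (\<lambda>\<gamma> \<delta>. P \<gamma> \<delta> + Q \<gamma> \<delta>)"

definition mneg :: "('g \<Rightarrow> 'g \<Rightarrow> 'r::ring_1 rpoly) \<Rightarrow> ('g \<Rightarrow> 'g \<Rightarrow> 'r rpoly)" where
  "mneg P = (\<lambda>\<gamma> \<delta>. - P \<gamma> \<delta>)"

definition mone :: "'g set \<Rightarrow> ('g \<Rightarrow> 'g \<Rightarrow> 'r::ring_1 rpoly)" where
  "mone \<Gamma> = (\<lambda>\<gamma> \<delta>. if \<gamma> \<in> \<Gamma> \<and> \<gamma> = \<delta> then 1 else 0)"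

definition mscal :: "'r::ring_1 \<Rightarrow> ('g \<Rightarrow> 'g \<Rightarrow> 'r rpoly) \<Rightarrow> ('g \<Rightarrow> 'g \<Rightarrow> 'r rpoly)" where
  "mscal z P = (\<lambda>\<gamma> \<delta>. Poly_Mapping.single 0 z * P \<gamma> \<delta>)"

definition center :: "'r::ring_1 set" where
  "center = {z. \<forall>a. z * a = a * z}"

definition z_subalgebra :: "'g set \<Rightarrow> ('g \<Rightarrow> 'g \<Rightarrow> 'r::ring_1 rpoly) set \<Rightarrow> bool" where
  "z_subalgebra \<Gamma> A \<longleftrightarrow> A \<subseteq> rmats \<Gamma> \<and> mone \<Gamma> \<in> A \<and>
     (\<forall>P\<in>A. \<forall>Q\<in>A. madd P Q \<in> A \<and> mmult \<Gamma> P Q \<in> A) \<and>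
     (\<forall>P\<in>A. mneg P \<in> A) \<and>
     (\<forall>z\<in>center. \<forall>P\<in>A. mscal z P \<in> A)"

definition PhiMap ::
  "('r::ring_1 \<Rightarrow> 'm::ab_group_add \<Rightarrow> 'm) \<Rightarrow> ('m \<Rightarrow> 'm) \<Rightarrow> 'g set \<Rightarrow> ('g \<Rightarrow> nat \<Rightarrow> 'm) \<Rightarrow> ('g \<Rightarrow> 'r rpoly) \<Rightarrow> 'm" where
  "PhiMap sm \<phi> \<Gamma> x f = (\<Sum>\<gamma>\<in>\<Gamma>. pact sm \<phi> (f \<gamma>) (x \<gamma> 1))"

definition kerPhi ::
  "('r::ring_1 \<Rightarrow> 'm::ab_group_add \<Rightarrow> 'm) \<Rightarrow> ('m \<Rightarrow> 'm) \<Rightarrow> 'g set \<Rightarrow> ('g \<Rightarrow> nat \<Rightarrow> 'm) \<Rightarrow> ('g \<Rightarrow> 'r rpoly) set" where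
  "kerPhi sm \<phi> \<Gamma> x = {f \<in> rvecs \<Gamma>. PhiMap sm \<phi> \<Gamma> x f = 0}"

definition MPhi ::
  "('r::ring_1 \<Rightarrow> 'm::ab_group_add \<Rightarrow> 'm) \<Rightarrow> ('m \<Rightarrow> 'm) \<Rightarrow> 'g set \<Rightarrow> ('g \<Rightarrow> nat \<Rightarrow> 'm) \<Rightarrow> ('g \<Rightarrow> 'g \<Rightarrow> 'r rpoly) set" where
  "MPhi sm \<phi> \<Gamma> x = {P \<in> rmats \<Gamma>. \<forall>f \<in> kerPhi sm \<phi> \<Gamma> x. vmult \<Gamma> f P \<in> kerPhi sm \<phi> \<Gamma> x}"

definition psiP ::
  "('r::ring_1 \<Rightarrow> 'm::ab_group_add \<Rightarrow> 'm) \<Rightarrow> ('m \<Rightarrow> 'm) \<Rightarrow> 'g set \<Rightarrow> ('g \<Rightarrow> nat \<Rightarrow> 'm) \<Rightarrow> ('g \<Rightarrow> 'g \<Rightarrow> 'r rpoly) \<Rightarrow> 'm \<Rightarrow> 'm" where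
  "psiP sm \<phi> \<Gamma> x P = (THE \<psi>. \<forall>f \<in> rvecs \<Gamma>. \<psi> (PhiMap sm \<phi> \<Gamma> x f) = PhiMap sm \<phi> \<Gamma> x (vmult \<Gamma> f P))"

definition centralizer :: "('r::ring_1 \<Rightarrow> 'm::ab_group_add \<Rightarrow> 'm) \<Rightarrow> ('m \<Rightarrow> 'm) \<Rightarrow> ('m \<Rightarrow> 'm) set" where
  "centralizer sm \<phi> = {\<psi>. rhom sm \<psi> \<and> \<psi> \<circ> \<phi> = \<phi> \<circ> \<psi>}"

end

theory Submission
  imports Defs
begin

lemma pm_repr: "(p :: nat \<Rightarrow>\<^sub>0 'a::comm_monoid_add) = (\<Sum>n\<in>Poly_Mapping.keys p. Poly_Mapping.single n (Poly_Mapping.lookup p n))"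
proof (rule poly_mapping_eqI)
  fix k
  show "Poly_Mapping.lookup p k = Poly_Mapping.lookup (\<Sum>n\<in>Poly_Mapping.keys p. Poly_Mapping.single n (Poly_Mapping.lookup p n)) k"
    apply (simp add: lookup_sum lookup_single)
    apply (cases "k \<in> Poly_Mapping.keys p")
     apply (simp add: when_def sum.delta)
    apply (simp add: when_def in_keys_iff)
    done
qed

lemma central_comm:
  assumes z: "(z::'r::ring_1) \<in> center"
  shows "Poly_Mapping.single 0 z * (p :: 'r rpoly) = p * Poly_Mapping.single 0 z"
proof -
  have "Poly_Mapping.single 0 z * p = (\<Sum>m\<in>Poly_Mapping.keys p. Poly_Mapping.single m (z * Poly_Mapping.lookup p m))"
    by (subst pm_repr[of p]) (simp add: sum_distrib_left mult_single)
  also have "\<dots> = (\<Sum>m\<in>Poly_Mapping.keys p. Poly_Mapping.single m (Poly_Mapping.lookup p m * z))"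
    using z by (simp add: center_def)
  also have "\<dots> = p * Poly_Mapping.single 0 z"
    by (subst (2) pm_repr[of p]) (simp add: sum_distrib_right mult_single)
  finally show ?thesis .
qed

lemma vmult_add: "vmult \<Gamma> (\<lambda>\<gamma>. f \<gamma> + g \<gamma>) P = (\<lambda>\<delta>. vmult \<Gamma> f P \<delta> + vmult \<Gamma> g P \<delta>)"
  by (simp add: vmult_def distrib_right sum.distrib)

lemma vmult_scal: "vmult \<Gamma> (\<lambda>\<gamma>. c * f \<gamma>) P = (\<lambda>\<delta>. c * vmult \<Gamma> f P \<delta>)"
  by (simp add: vmult_def sum_distrib_left mult.assoc)

lemma vmult_madd: "vmult \<Gamma> f (madd P Q) = (\<lambda>\<delta>. vmult \<Gamma> f P \<delta> + vmult \<Gamma> f Q \<delta>)"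
  by (simp add: vmult_def madd_def distrib_left sum.distrib)

lemma vmult_mneg: "vmult \<Gamma> f (mneg P) = (\<lambda>\<delta>. - vmult \<Gamma> f P \<delta>)"
  by (simp add: vmult_def mneg_def sum_negf)

lemma vmult_mone: "finite \<Gamma> \<Longrightarrow> f \<in> rvecs \<Gamma> \<Longrightarrow> vmult \<Gamma> f (mone \<Gamma>) = f"
proof (rule ext)
  fix \<delta> assume fin: "finite \<Gamma>" and f: "f \<in> rvecs \<Gamma>"
  have "vmult \<Gamma> f (mone \<Gamma>) \<delta> = (\<Sum>\<gamma>\<in>\<Gamma>. if \<gamma> = \<delta> then f \<gamma> else 0)"
    unfolding vmult_def mone_def by (rule sum.cong) auto
  also have "\<dots> = f \<delta>" using fin f by (simp add: sum.delta rvecs_def)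
  finally show "vmult \<Gamma> f (mone \<Gamma>) \<delta> = f \<delta>" .
qed

lemma vmult_mscal: "z \<in> center \<Longrightarrow> vmult \<Gamma> f (mscal z P) = (\<lambda>\<delta>. Poly_Mapping.single 0 z * vmult \<Gamma> f P \<delta>)"
proof (rule ext)
  fix \<delta> assume z: "z \<in> center"
  have "vmult \<Gamma> f (mscal z P) \<delta> = (\<Sum>\<gamma>\<in>\<Gamma>. (f \<gamma> * Poly_Mapping.single 0 z) * P \<gamma> \<delta>)"
    by (simp add: vmult_def mscal_def mult.assoc)
  also have "\<dots> = (\<Sum>\<gamma>\<in>\<Gamma>. Poly_Mapping.single 0 z * (f \<gamma> * P \<gamma> \<delta>))"
    by (rule sum.cong[OF refl]) (simp only: central_comm[OF z, symmetric] mult.assoc)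
  also have "\<dots> = Poly_Mapping.single 0 z * vmult \<Gamma> f P \<delta>"
    by (simp add: vmult_def sum_distrib_left)
  finally show "vmult \<Gamma> f (mscal z P) \<delta> = Poly_Mapping.single 0 z * vmult \<Gamma> f P \<delta>" .
qed

lemma vmult_assoc: "vmult \<Gamma> (vmult \<Gamma> f P) Q = vmult \<Gamma> f (mmult \<Gamma> P Q)"
proof (rule ext)
  fix \<delta>
  have "vmult \<Gamma> (vmult \<Gamma> f P) Q \<delta> = (\<Sum>\<epsilon>\<in>\<Gamma>. \<Sum>\<gamma>\<in>\<Gamma>. f \<gamma> * (P \<gamma> \<epsilon> * Q \<epsilon> \<delta>))"
    unfolding vmult_def by (simp add: sum_distrib_right mult.assoc)
  also have "\<dots> = (\<Sum>\<gamma>\<in>\<Gamma>. \<Sum>\<epsilon>\<in>\<Gamma>. f \<gamma> * (P \<gamma> \<epsilon> * Q \<epsilon> \<delta>))"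
    by (rule sum.swap)
  also have "\<dots> = vmult \<Gamma> f (mmult \<Gamma> P Q) \<delta>"
    unfolding vmult_def mmult_def by (simp add: sum_distrib_left)
  finally show "vmult \<Gamma> (vmult \<Gamma> f P) Q \<delta> = vmult \<Gamma> f (mmult \<Gamma> P Q) \<delta>" .
qed

lemma vmult_rvecs: "P \<in> rmats \<Gamma> \<Longrightarrow> vmult \<Gamma> f P \<in> rvecs \<Gamma>"
  by (simp add: vmult_def rmats_def rvecs_def)

context
  fixes sm :: "'r::ring_1 \<Rightarrow> 'm::ab_group_add \<Rightarrow> 'm" and \<phi> :: "'m \<Rightarrow> 'm"
  assumes lm: "lmodule sm" and rh: "rhom sm \<phi>"
begin

lemma sm_add_l: "sm (a + b) u = sm a u + sm b u" using lm by (simp add: lmodule_def)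
lemma sm_add_r: "sm a (u + v) = sm a u + sm a v" using lm by (simp add: lmodule_def)
lemma sm_mult: "sm (a * b) u = sm a (sm b u)" using lm by (simp add: lmodule_def)
lemma sm_one: "sm 1 u = u" using lm by (simp add: lmodule_def)
lemma sm_0l: "sm 0 u = 0" using sm_add_l[of 0 0 u] by simp
lemma sm_0r: "sm a 0 = 0" using sm_add_r[of a 0 0] by simp
lemma sm_sum: "sm a (sum f I) = (\<Sum>i\<in>I. sm a (f i))"
  by (induction I rule: infinite_finite_induct) (auto simp: sm_0r sm_add_r)

lemma rhom_pow: "rhom sm (\<phi> ^^ n)"
  using rh by (induction n) (auto simp: rhom_def)

lemma rhom_0: "rhom sm f \<Longrightarrow> f 0 = 0"
  unfolding rhom_def by (metis add_cancel_right_right)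

lemma rhom_sum: "rhom sm f \<Longrightarrow> f (sum g I) = (\<Sum>i\<in>I. f (g i))"
  by (induction I rule: infinite_finite_induct) (auto simp: rhom_0 rhom_def)

lemma pact_alt: "finite S \<Longrightarrow> Poly_Mapping.keys p \<subseteq> S \<Longrightarrow>
   pact sm \<phi> p u = (\<Sum>n\<in>S. sm (Poly_Mapping.lookup p n) ((\<phi> ^^ n) u))"
  unfolding pact_def
  by (rule sum.mono_neutral_left) (auto simp: in_keys_iff sm_0l)

lemma pact_zero: "pact sm \<phi> 0 u = 0" by (simp add: pact_def)

lemma pact_add: "pact sm \<phi> (p + q) u = pact sm \<phi> p u + pact sm \<phi> q u"
proof -
  let ?S = "Poly_Mapping.keys p \<union> Poly_Mapping.keys q"
  have f: "finite ?S" by simp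
  have "pact sm \<phi> (p + q) u = (\<Sum>n\<in>?S. sm (Poly_Mapping.lookup (p+q) n) ((\<phi> ^^ n) u))"
    by (rule pact_alt[OF f]) (metis keys_add)
  also have "\<dots> = (\<Sum>n\<in>?S. sm (Poly_Mapping.lookup p n) ((\<phi> ^^ n) u)) + (\<Sum>n\<in>?S. sm (Poly_Mapping.lookup q n) ((\<phi> ^^ n) u))"
    by (simp add: lookup_add sm_add_l sum.distrib)
  also have "\<dots> = pact sm \<phi> p u + pact sm \<phi> q u"
    using pact_alt[OF f, of p u] pact_alt[OF f, of q u] by simp
  finally show ?thesis .
qed

lemma pact_sum: "pact sm \<phi> (sum g I) u = (\<Sum>i\<in>I. pact sm \<phi> (g i) u)"
  by (induction I rule: infinite_finite_induct) (auto simp: pact_zero pact_add)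

lemma pact_single: "pact sm \<phi> (Poly_Mapping.single n a) u = sm a ((\<phi> ^^ n) u)"
  by (simp add: pact_def sm_0l)

lemma pact_add_u: "pact sm \<phi> p (u + v) = pact sm \<phi> p u + pact sm \<phi> p v"
  unfolding pact_def using rhom_pow by (simp add: rhom_def sm_add_r sum.distrib)

lemma pact_0_u: "pact sm \<phi> p 0 = 0"
  unfolding pact_def using rhom_pow by (simp add: rhom_0 sm_0r)

lemma pact_sum_u: "pact sm \<phi> p (sum g I) = (\<Sum>i\<in>I. pact sm \<phi> p (g i))"
  by (induction I rule: infinite_finite_induct) (auto simp: pact_0_u pact_add_u)

lemma pact_single_mult: "pact sm \<phi> (Poly_Mapping.single n a * q) u = sm a ((\<phi> ^^ n) (pact sm \<phi> q u))"
proof -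
  have "Poly_Mapping.single n a * q = (\<Sum>m\<in>Poly_Mapping.keys q. Poly_Mapping.single (n+m) (a * Poly_Mapping.lookup q m))"
    by (subst pm_repr[of q]) (simp add: sum_distrib_left mult_single)
  hence "pact sm \<phi> (Poly_Mapping.single n a * q) u = (\<Sum>m\<in>Poly_Mapping.keys q. sm (a * Poly_Mapping.lookup q m) ((\<phi> ^^ (n+m)) u))"
    by (simp add: pact_sum pact_single)
  also have "\<dots> = sm a ((\<phi> ^^ n) (pact sm \<phi> q u))"
    unfolding pact_def using rhom_pow[of n]
    by (simp add: rhom_sum sm_sum sm_mult funpow_add rhom_def)
  finally show ?thesis .
qed

lemma pact_mult: "pact sm \<phi> (p * q) u = pact sm \<phi> p (pact sm \<phi> q u)"
proof -
  have "p * q = (\<Sum>n\<in>Poly_Mapping.keys p. Poly_Mapping.single n (Poly_Mapping.lookup p n) * q)"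
    by (subst pm_repr[of p]) (simp add: sum_distrib_right)
  hence "pact sm \<phi> (p * q) u = (\<Sum>n\<in>Poly_Mapping.keys p. sm (Poly_Mapping.lookup p n) ((\<phi> ^^ n) (pact sm \<phi> q u)))"
    by (simp add: pact_sum pact_single_mult)
  thus ?thesis by (simp add: pact_def[of sm \<phi> p])
qed

lemma pact_one_single: "pact sm \<phi> (Poly_Mapping.single 0 a) u = sm a u"
  by (simp add: pact_single)

lemma pact_t: "pact sm \<phi> (Poly_Mapping.single 1 1) u = \<phi> u"
  by (simp add: pact_single sm_one)

lemma Phi_add: "PhiMap sm \<phi> \<Gamma> x (\<lambda>\<gamma>. f \<gamma> + g \<gamma>) = PhiMap sm \<phi> \<Gamma> x f + PhiMap sm \<phi> \<Gamma> x g"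
  by (simp add: PhiMap_def pact_add sum.distrib)

lemma Phi_zero: "PhiMap sm \<phi> \<Gamma> x (\<lambda>\<gamma>. 0) = 0"
  by (simp add: PhiMap_def pact_zero)

lemma Phi_neg: "PhiMap sm \<phi> \<Gamma> x (\<lambda>\<gamma>. - f \<gamma>) = - PhiMap sm \<phi> \<Gamma> x f"
  using Phi_add[of \<Gamma> x "\<lambda>\<gamma>. - f \<gamma>" f] Phi_zero[of \<Gamma> x]
  by (simp add: eq_neg_iff_add_eq_0)

lemma Phi_scal: "PhiMap sm \<phi> \<Gamma> x (\<lambda>\<gamma>. c * f \<gamma>) = pact sm \<phi> c (PhiMap sm \<phi> \<Gamma> x f)"
  by (simp add: PhiMap_def pact_mult pact_sum_u)

lemma Phi_cong: "(\<And>\<gamma>. \<gamma> \<in> \<Gamma> \<Longrightarrow> f \<gamma> = g \<gamma>) \<Longrightarrow> PhiMap sm \<phi> \<Gamma> x f = PhiMap sm \<phi> \<Gamma> x g"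
  by (simp add: PhiMap_def)

lemma chain:
  assumes jb: "jordan_base sm \<phi> \<Gamma> k x" and g: "\<gamma> \<in> \<Gamma>"
  shows "1 \<le> i \<Longrightarrow> i \<le> k \<gamma> \<Longrightarrow> x \<gamma> i = (\<phi> ^^ (i - 1)) (x \<gamma> 1)"
proof (induction i)
  case 0
  then show ?case by simp
next
  case (Suc i)
  show ?case
  proof (cases "i = 0")
    case True then show ?thesis by simp
  next
    case False
    hence "x \<gamma> (Suc i) = \<phi> (x \<gamma> i)" using jb g Suc.prems unfolding jordan_base_def by auto
    also have "\<dots> = \<phi> ((\<phi> ^^ (i - 1)) (x \<gamma> 1))" using Suc False by simp
    also have "\<dots> = (\<phi> ^^ (Suc i - 1)) (x \<gamma> 1)"
    proof -
      obtain j where "i = Suc j" using False not0_implies_Suc by blast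
      thus ?thesis by simp
    qed
    finally show ?thesis .
  qed
qed

lemma Phi_surj:
  assumes jb: "jordan_base sm \<phi> \<Gamma> k x" and fin: "finite \<Gamma>"
  shows "\<exists>f\<in>rvecs \<Gamma>. PhiMap sm \<phi> \<Gamma> x f = u"
proof -
  have "\<forall>m. \<exists>!c.
          (\<forall>(\<gamma>, i)\<in>jidx \<Gamma> k. c (\<gamma>, i) \<in> cyc sm (x \<gamma> i)) \<and>
          (\<forall>p. p \<notin> jidx \<Gamma> k \<longrightarrow> c p = 0) \<and>
          m = (\<Sum>p\<in>jidx \<Gamma> k. c p)" using jb unfolding jordan_base_def by blast
  from ex1_implies_ex[OF spec[OF this, of u]] obtain c where
    c1: "\<forall>(\<gamma>, i)\<in>jidx \<Gamma> k. c (\<gamma>, i) \<in> cyc sm (x \<gamma> i)"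
    and c3: "u = (\<Sum>p\<in>jidx \<Gamma> k. c p)" by blast
  define a where "a = (\<lambda>\<gamma> i. SOME a. c (\<gamma>, i) = sm a (x \<gamma> i))"
  have ha: "c (\<gamma>, i) = sm (a \<gamma> i) (x \<gamma> i)" if "\<gamma> \<in> \<Gamma>" "i \<in> {1..k \<gamma>}" for \<gamma> i
  proof -
    have "c (\<gamma>, i) \<in> cyc sm (x \<gamma> i)" using c1 that unfolding jidx_def by auto
    then obtain b where "c (\<gamma>, i) = sm b (x \<gamma> i)" unfolding cyc_def by auto
    thus ?thesis unfolding a_def by (rule someI)
  qed
  define f where "f = (\<lambda>\<gamma>. if \<gamma> \<in> \<Gamma> then (\<Sum>i\<in>{1..k \<gamma>}. Poly_Mapping.single (i - 1) (a \<gamma> i)) else 0)"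
  have "f \<in> rvecs \<Gamma>" unfolding rvecs_def f_def by auto
  moreover have "PhiMap sm \<phi> \<Gamma> x f = u"
  proof -
    have "PhiMap sm \<phi> \<Gamma> x f = (\<Sum>\<gamma>\<in>\<Gamma>. \<Sum>i\<in>{1..k \<gamma>}. sm (a \<gamma> i) ((\<phi> ^^ (i - 1)) (x \<gamma> 1)))"
      unfolding PhiMap_def f_def by (simp add: pact_sum pact_single)
    also have "\<dots> = (\<Sum>\<gamma>\<in>\<Gamma>. \<Sum>i\<in>{1..k \<gamma>}. c (\<gamma>, i))"
    proof (rule sum.cong[OF refl], rule sum.cong[OF refl])
      fix \<gamma> i assume g: "\<gamma> \<in> \<Gamma>" and i: "i \<in> {1..k \<gamma>}"
      have "x \<gamma> i = (\<phi> ^^ (i - 1)) (x \<gamma> 1)" using chain[OF jb g, of i] i by simp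
      thus "sm (a \<gamma> i) ((\<phi> ^^ (i - 1)) (x \<gamma> 1)) = c (\<gamma>, i)" using ha[OF g i] by simp
    qed
    also have "\<dots> = (\<Sum>p\<in>jidx \<Gamma> k. c p)"
      unfolding jidx_def using fin by (subst sum.Sigma) auto
    finally show ?thesis using c3 by simp
  qed
  ultimately show ?thesis by blast
qed

end

theorem lemma4p1:
  fixes sm :: "'r::ring_1 \<Rightarrow> 'm::ab_group_add \<Rightarrow> 'm"
    and \<phi> :: "'m \<Rightarrow> 'm"
    and \<Gamma> :: "'g set"
    and k :: "'g \<Rightarrow> nat"
    and x :: "'g \<Rightarrow> nat \<Rightarrow> 'm"
  assumes "lmodule sm"
    and "finitely_generated sm"
    and "semisimple sm"
    and "rhom sm \<phi>"
    and "nilpotent_map \<phi>"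
    and "jordan_base sm \<phi> \<Gamma> k x"
    and "finite \<Gamma>"
  shows "z_subalgebra \<Gamma> (MPhi sm \<phi> \<Gamma> x) \<and>
    (\<forall>P \<in> MPhi sm \<phi> \<Gamma> x.
       (\<exists>!\<psi>. \<forall>f \<in> rvecs \<Gamma>. \<psi> (PhiMap sm \<phi> \<Gamma> x f) = PhiMap sm \<phi> \<Gamma> x (vmult \<Gamma> f P)) \<and>
       psiP sm \<phi> \<Gamma> x P \<in> centralizer sm \<phi>) \<and>
    psiP sm \<phi> \<Gamma> x (mone \<Gamma>) = id \<and>
    (\<forall>P \<in> MPhi sm \<phi> \<Gamma> x. \<forall>Q \<in> MPhi sm \<phi> \<Gamma> x.
       psiP sm \<phi> \<Gamma> x (madd P Q) = (\<lambda>u. psiP sm \<phi> \<Gamma> x P u + psiP sm \<phi> \<Gamma> x Q u) \<and>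
       psiP sm \<phi> \<Gamma> x (mmult \<Gamma> P Q) = psiP sm \<phi> \<Gamma> x Q \<circ> psiP sm \<phi> \<Gamma> x P) \<and>
    (\<forall>z \<in> center. \<forall>P \<in> MPhi sm \<phi> \<Gamma> x.
       psiP sm \<phi> \<Gamma> x (mscal z P) = (\<lambda>u. sm z (psiP sm \<phi> \<Gamma> x P u)))"
proof -
  note lm = assms(1) and rh = assms(4) and jb = assms(6) and fin = assms(7)
  let ?Phi = "PhiMap sm \<phi> \<Gamma> x"
  let ?M = "MPhi sm \<phi> \<Gamma> x"
  note Padd = Phi_add[OF lm rh] and Pzero = Phi_zero[OF lm rh] and Pneg = Phi_neg[OF lm rh]
    and Pscal = Phi_scal[OF lm rh]
  have surj: "\<And>u. \<exists>f\<in>rvecs \<Gamma>. ?Phi f = u" using Phi_surj[OF lm rh jb fin] .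
  have ext': "\<psi>1 = \<psi>2" if "\<And>f. f \<in> rvecs \<Gamma> \<Longrightarrow> \<psi>1 (?Phi f) = \<psi>2 (?Phi f)" for \<psi>1 \<psi>2 :: "'m \<Rightarrow> 'm"
  proof
    fix u obtain f where "f \<in> rvecs \<Gamma>" "?Phi f = u" using surj by blast
    thus "\<psi>1 u = \<psi>2 u" using that by blast
  qed
  have rv_add: "(\<lambda>\<gamma>. f \<gamma> + g \<gamma>) \<in> rvecs \<Gamma>" if "f \<in> rvecs \<Gamma>" "g \<in> rvecs \<Gamma>" for f g :: "'g \<Rightarrow> 'r rpoly"
    using that by (simp add: rvecs_def)
  have rv_diff: "(\<lambda>\<gamma>. f \<gamma> - g \<gamma>) \<in> rvecs \<Gamma>" if "f \<in> rvecs \<Gamma>" "g \<in> rvecs \<Gamma>" for f g :: "'g \<Rightarrow> 'r rpoly"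
    using that by (simp add: rvecs_def)
  have rv_scal: "(\<lambda>\<gamma>. c * f \<gamma>) \<in> rvecs \<Gamma>" if "f \<in> rvecs \<Gamma>" for f and c :: "'r rpoly"
    using that by (simp add: rvecs_def)
  have Mrm: "P \<in> rmats \<Gamma>" if "P \<in> ?M" for P using that by (simp add: MPhi_def)
  have Mker: "?Phi (vmult \<Gamma> f P) = 0" if "P \<in> ?M" "f \<in> rvecs \<Gamma>" "?Phi f = 0" for P f
    using that by (simp add: MPhi_def kerPhi_def)
  have inM: "P \<in> ?M" if "P \<in> rmats \<Gamma>" "\<And>f. f \<in> rvecs \<Gamma> \<Longrightarrow> ?Phi f = 0 \<Longrightarrow> ?Phi (vmult \<Gamma> f P) = 0" for P
    using that by (simp add: MPhi_def kerPhi_def vmult_rvecs)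
  have wd: "?Phi (vmult \<Gamma> f P) = ?Phi (vmult \<Gamma> g P)"
    if P: "P \<in> ?M" and f: "f \<in> rvecs \<Gamma>" and g: "g \<in> rvecs \<Gamma>" and e: "?Phi f = ?Phi g" for P f g
  proof -
    define h where "h = (\<lambda>\<gamma>. f \<gamma> - g \<gamma>)"
    have h: "h \<in> rvecs \<Gamma>" unfolding h_def using rv_diff[OF f g] .
    have fh: "f = (\<lambda>\<gamma>. h \<gamma> + g \<gamma>)" unfolding h_def by simp
    have "?Phi f = ?Phi h + ?Phi g" by (subst fh) (rule Padd)
    hence h0: "?Phi h = 0" using e by simp
    have "?Phi (vmult \<Gamma> f P) = ?Phi (vmult \<Gamma> h P) + ?Phi (vmult \<Gamma> g P)"
      by (subst fh) (simp add: vmult_add Padd)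
    thus ?thesis using Mker[OF P h h0] by simp
  qed
  have ex1: "\<exists>!\<psi>. \<forall>f \<in> rvecs \<Gamma>. \<psi> (?Phi f) = ?Phi (vmult \<Gamma> f P)" if P: "P \<in> ?M" for P
  proof -
    define \<psi> where "\<psi> = (\<lambda>u. ?Phi (vmult \<Gamma> (SOME f. f \<in> rvecs \<Gamma> \<and> ?Phi f = u) P))"
    have ex: "\<forall>f \<in> rvecs \<Gamma>. \<psi> (?Phi f) = ?Phi (vmult \<Gamma> f P)"
    proof
      fix f :: "'g \<Rightarrow> 'r rpoly" assume f: "f \<in> rvecs \<Gamma>"
      let ?g = "SOME g. g \<in> rvecs \<Gamma> \<and> ?Phi g = ?Phi f"
      have "?g \<in> rvecs \<Gamma> \<and> ?Phi ?g = ?Phi f" by (rule someI[of _ f]) (simp add: f)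
      thus "\<psi> (?Phi f) = ?Phi (vmult \<Gamma> f P)" unfolding \<psi>_def using wd[OF P _ f] by blast
    qed
    have un: "\<psi>1 = \<psi>2" if a: "\<forall>f \<in> rvecs \<Gamma>. \<psi>1 (?Phi f) = ?Phi (vmult \<Gamma> f P)"
      and b: "\<forall>f \<in> rvecs \<Gamma>. \<psi>2 (?Phi f) = ?Phi (vmult \<Gamma> f P)" for \<psi>1 \<psi>2
      by (rule ext') (simp add: a b)
    show ?thesis using ex un by blast
  qed
  have psi: "psiP sm \<phi> \<Gamma> x P (?Phi f) = ?Phi (vmult \<Gamma> f P)" if "P \<in> ?M" "f \<in> rvecs \<Gamma>" for P f
    using theI'[OF ex1[OF that(1)]] that(2) unfolding psiP_def by blast
  have sm_Phi: "sm a (?Phi f) = ?Phi (\<lambda>\<gamma>. Poly_Mapping.single 0 a * f \<gamma>)" for a f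
    by (simp add: Pscal pact_one_single[OF lm rh])
  have phi_Phi: "\<phi> (?Phi f) = ?Phi (\<lambda>\<gamma>. Poly_Mapping.single 1 1 * f \<gamma>)" for f
    by (simp only: Pscal pact_t[OF lm rh])
  have mone_rm: "mone \<Gamma> \<in> rmats \<Gamma>" by (simp add: mone_def rmats_def)
  have mone_M: "mone \<Gamma> \<in> ?M"
    by (rule inM[OF mone_rm]) (simp add: vmult_mone[OF fin])
  have madd_M: "madd P Q \<in> ?M" if "P \<in> ?M" "Q \<in> ?M" for P Q
  proof (rule inM)
    show "madd P Q \<in> rmats \<Gamma>" using Mrm[OF that(1)] Mrm[OF that(2)] by (simp add: rmats_def madd_def)
    fix f :: "'g \<Rightarrow> 'r rpoly" assume "f \<in> rvecs \<Gamma>" "?Phi f = 0"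
    thus "?Phi (vmult \<Gamma> f (madd P Q)) = 0" using Mker[OF that(1)] Mker[OF that(2)]
      by (simp add: vmult_madd Padd)
  qed
  have mneg_M: "mneg P \<in> ?M" if "P \<in> ?M" for P
  proof (rule inM)
    show "mneg P \<in> rmats \<Gamma>" using Mrm[OF that] by (simp add: rmats_def mneg_def)
    fix f :: "'g \<Rightarrow> 'r rpoly" assume "f \<in> rvecs \<Gamma>" "?Phi f = 0"
    thus "?Phi (vmult \<Gamma> f (mneg P)) = 0" using Mker[OF that]
      by (simp add: vmult_mneg Pneg)
  qed
  have mmult_M: "mmult \<Gamma> P Q \<in> ?M" if "P \<in> ?M" "Q \<in> ?M" for P Q
  proof (rule inM)
    have rP: "P \<in> rmats \<Gamma>" and rQ: "Q \<in> rmats \<Gamma>" using Mrm that by auto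
    show "mmult \<Gamma> P Q \<in> rmats \<Gamma>" unfolding rmats_def mem_Collect_eq
    proof (intro allI impI)
      fix \<gamma> \<delta> assume "\<gamma> \<notin> \<Gamma> \<or> \<delta> \<notin> \<Gamma>"
      hence "\<forall>\<epsilon>\<in>\<Gamma>. P \<gamma> \<epsilon> * Q \<epsilon> \<delta> = 0" using rP rQ unfolding rmats_def by auto
      thus "mmult \<Gamma> P Q \<gamma> \<delta> = 0" unfolding mmult_def by simp
    qed
    fix f :: "'g \<Rightarrow> 'r rpoly" assume f: "f \<in> rvecs \<Gamma>" "?Phi f = 0"
    have "vmult \<Gamma> f P \<in> rvecs \<Gamma>" by (rule vmult_rvecs[OF Mrm[OF that(1)]])
    moreover have "?Phi (vmult \<Gamma> f P) = 0" using Mker[OF that(1) f] .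
    ultimately show "?Phi (vmult \<Gamma> f (mmult \<Gamma> P Q)) = 0"
      using Mker[OF that(2)] by (simp add: vmult_assoc[symmetric])
  qed
  have mscal_M: "mscal z P \<in> ?M" if z: "z \<in> center" and P: "P \<in> ?M" for z P
  proof (rule inM)
    show "mscal z P \<in> rmats \<Gamma>" using Mrm[OF P] by (simp add: rmats_def mscal_def)
    fix f :: "'g \<Rightarrow> 'r rpoly" assume f: "f \<in> rvecs \<Gamma>" "?Phi f = 0"
    have "?Phi (vmult \<Gamma> f (mscal z P)) = pact sm \<phi> (Poly_Mapping.single 0 z) (?Phi (vmult \<Gamma> f P))"
      by (simp only: vmult_mscal[OF z] Pscal)
    also have "\<dots> = 0" using Mker[OF P f] pact_0_u[OF lm rh] by simp
    finally show "?Phi (vmult \<Gamma> f (mscal z P)) = 0" .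
  qed
  have sub: "z_subalgebra \<Gamma> ?M"
    unfolding z_subalgebra_def
    by (intro conjI ballI subsetI mone_M madd_M mmult_M mneg_M mscal_M Mrm) assumption+
  have cent: "psiP sm \<phi> \<Gamma> x P \<in> centralizer sm \<phi>" if P: "P \<in> ?M" for P
  proof -
    let ?p = "psiP sm \<phi> \<Gamma> x P"
    have rmP: "P \<in> rmats \<Gamma>" using Mrm[OF P] .
    have add: "?p (u + v) = ?p u + ?p v" for u v
    proof -
      obtain f g where f: "f \<in> rvecs \<Gamma>" "?Phi f = u" and g: "g \<in> rvecs \<Gamma>" "?Phi g = v" using surj by meson
      have "u + v = ?Phi (\<lambda>\<gamma>. f \<gamma> + g \<gamma>)" using f g by (simp add: Padd)
      hence "?p (u + v) = ?Phi (vmult \<Gamma> (\<lambda>\<gamma>. f \<gamma> + g \<gamma>) P)" using psi[OF P rv_add[OF f(1) g(1)]] by simp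
      also have "\<dots> = ?p u + ?p v" using psi[OF P f(1)] psi[OF P g(1)] f g by (simp add: vmult_add Padd)
      finally show ?thesis .
    qed
    have smc: "?p (sm a u) = sm a (?p u)" for a u
    proof -
      obtain f where f: "f \<in> rvecs \<Gamma>" "?Phi f = u" using surj by meson
      have "?p (sm a u) = ?Phi (vmult \<Gamma> (\<lambda>\<gamma>. Poly_Mapping.single 0 a * f \<gamma>) P)"
        using f psi[OF P rv_scal[OF f(1)]] sm_Phi by metis
      also have "\<dots> = sm a (?p u)" using psi[OF P f(1)] f by (simp add: vmult_scal sm_Phi)
      finally show ?thesis .
    qed
    have com: "?p (\<phi> u) = \<phi> (?p u)" for u
    proof -
      obtain f where f: "f \<in> rvecs \<Gamma>" "?Phi f = u" using surj by meson
      have "?p (\<phi> u) = ?Phi (vmult \<Gamma> (\<lambda>\<gamma>. Poly_Mapping.single 1 1 * f \<gamma>) P)"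
        using f psi[OF P rv_scal[OF f(1)]] phi_Phi by metis
      also have "\<dots> = \<phi> (?p u)" using psi[OF P f(1)] f by (simp add: vmult_scal phi_Phi)
      finally show ?thesis .
    qed
    show ?thesis unfolding centralizer_def rhom_def using add smc com by auto
  qed
  have pone: "psiP sm \<phi> \<Gamma> x (mone \<Gamma>) = id"
    by (rule ext') (simp add: psi[OF mone_M] vmult_mone[OF fin])
  have pops: "psiP sm \<phi> \<Gamma> x (madd P Q) = (\<lambda>u. psiP sm \<phi> \<Gamma> x P u + psiP sm \<phi> \<Gamma> x Q u) \<and>
       psiP sm \<phi> \<Gamma> x (mmult \<Gamma> P Q) = psiP sm \<phi> \<Gamma> x Q \<circ> psiP sm \<phi> \<Gamma> x P"
    if P: "P \<in> ?M" and Q: "Q \<in> ?M" for P Q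
  proof
    show "psiP sm \<phi> \<Gamma> x (madd P Q) = (\<lambda>u. psiP sm \<phi> \<Gamma> x P u + psiP sm \<phi> \<Gamma> x Q u)"
      by (rule ext') (simp add: psi[OF madd_M[OF P Q]] psi[OF P] psi[OF Q] vmult_madd Padd)
    show "psiP sm \<phi> \<Gamma> x (mmult \<Gamma> P Q) = psiP sm \<phi> \<Gamma> x Q \<circ> psiP sm \<phi> \<Gamma> x P"
      by (rule ext') (simp add: psi[OF mmult_M[OF P Q]] psi[OF P] psi[OF Q] vmult_rvecs[OF Mrm[OF P]] vmult_assoc)
  qed
  have pscal: "psiP sm \<phi> \<Gamma> x (mscal z P) = (\<lambda>u. sm z (psiP sm \<phi> \<Gamma> x P u))"
    if z: "z \<in> center" and P: "P \<in> ?M" for z P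
    by (rule ext') (simp add: psi[OF mscal_M[OF z P]] psi[OF P] vmult_mscal[OF z] sm_Phi)
  show ?thesis using sub ex1 cent pone pops pscal by blast
qed

end
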